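(* If $G$ is a connected graph and $f=(V_0,V_1,V_2)$ is an OIRD function of $G$ of minimum weight $\gamma_{oiR}(G)$ (where $V_i=\{v: f(v)=i\}$), then $\gamma_{oidR}(G)\le 2\gamma_{oiR}(G)-|V_2|$.
   Context: A DRD function of $G$ is $f:V(G)\to\{0,1,2,3\}$ such that every vertex with value $0$ has a neighbor with value $3$ or two neighbors with value $2$, and every vertex with value $1$ has a neighbor with value at least $2$; it is an OIDRD function if the set of vertices with value $0$ is independent, and $\gamma_{oidR}(G)$ is the minimum weight $\sum_v f(v)$ of an OIDRD function. A Roman dominating function is $f:V(G)\to\{0,1,2\}$ such that every vertex with value $0$ has a neighbor with value $2$; it is an OIRD function if the set of vertices with value $0$ is independent, and $\gamma_{oiR}(G)$ is the minimum weight of an OIRD function. *)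

theory Defs
  imports Main
begin

definition graph :: "'a set \<Rightarrow> ('a \<Rightarrow> 'a \<Rightarrow> bool) \<Rightarrow> bool" where
  "graph V E \<longleftrightarrow> finite V \<and> (\<forall>u v. E u v \<longrightarrow> u \<in> V \<and> v \<in> V)
     \<and> (\<forall>u v. E u v \<longrightarrow> E v u) \<and> (\<forall>v. \<not> E v v)"

definition connected_graph :: "'a set \<Rightarrow> ('a \<Rightarrow> 'a \<Rightarrow> bool) \<Rightarrow> bool" where
  "connected_graph V E \<longleftrightarrow> graph V E \<and> V \<noteq> {} \<and> (\<forall>u\<in>V. \<forall>v\<in>V. E\<^sup>*\<^sup>* u v)"

definition weight :: "'a set \<Rightarrow> ('a \<Rightarrow> nat) \<Rightarrow> nat" where
  "weight V f = (\<Sum>v\<in>V. f v)"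

definition is_RDF :: "'a set \<Rightarrow> ('a \<Rightarrow> 'a \<Rightarrow> bool) \<Rightarrow> ('a \<Rightarrow> nat) \<Rightarrow> bool" where
  "is_RDF V E f \<longleftrightarrow> (\<forall>v\<in>V. f v \<le> 2 \<and> (f v = 0 \<longrightarrow> (\<exists>u. E v u \<and> f u = 2)))"

definition is_OIRD :: "'a set \<Rightarrow> ('a \<Rightarrow> 'a \<Rightarrow> bool) \<Rightarrow> ('a \<Rightarrow> nat) \<Rightarrow> bool" where
  "is_OIRD V E f \<longleftrightarrow> is_RDF V E f \<and>
     (\<forall>u\<in>V. \<forall>v\<in>V. f u = 0 \<and> f v = 0 \<longrightarrow> \<not> E u v)"

definition is_DRD :: "'a set \<Rightarrow> ('a \<Rightarrow> 'a \<Rightarrow> bool) \<Rightarrow> ('a \<Rightarrow> nat) \<Rightarrow> bool" where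
  "is_DRD V E f \<longleftrightarrow> (\<forall>v\<in>V. f v \<le> 3
     \<and> (f v = 0 \<longrightarrow> (\<exists>u. E v u \<and> f u = 3) \<or>
                     (\<exists>u w. u \<noteq> w \<and> E v u \<and> E v w \<and> f u = 2 \<and> f w = 2))
     \<and> (f v = 1 \<longrightarrow> (\<exists>u. E v u \<and> f u \<ge> 2)))"

definition is_OIDRD :: "'a set \<Rightarrow> ('a \<Rightarrow> 'a \<Rightarrow> bool) \<Rightarrow> ('a \<Rightarrow> nat) \<Rightarrow> bool" where
  "is_OIDRD V E f \<longleftrightarrow> is_DRD V E f \<and>
     (\<forall>u\<in>V. \<forall>v\<in>V. f u = 0 \<and> f v = 0 \<longrightarrow> \<not> E u v)"

definition gamma_oiR :: "'a set \<Rightarrow> ('a \<Rightarrow> 'a \<Rightarrow> bool) \<Rightarrow> nat" where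
  "gamma_oiR V E = (LEAST w. \<exists>f. is_OIRD V E f \<and> weight V f = w)"

definition gamma_oidR :: "'a set \<Rightarrow> ('a \<Rightarrow> 'a \<Rightarrow> bool) \<Rightarrow> nat" where
  "gamma_oidR V E = (LEAST w. \<exists>f. is_OIDRD V E f \<and> weight V f = w)"

end

theory Submission
  imports Defs
begin

theorem corollary1:
  fixes V :: "'a set" and E :: "'a \<Rightarrow> 'a \<Rightarrow> bool" and f :: "'a \<Rightarrow> nat"
  assumes "connected_graph V E"
    and "is_OIRD V E f"
    and "weight V f = gamma_oiR V E"
  shows "int (gamma_oidR V E) \<le> 2 * int (gamma_oiR V E) - int (card {v\<in>V. f v = 2})"
proof -
  define g where "g = (\<lambda>v. if f v = 0 then 0 else if f v = 1 then (2::nat) else 3)"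
  have fin: "finite V" using assms(1) unfolding connected_graph_def graph_def by blast
  have rdf: "\<forall>v\<in>V. f v \<le> 2 \<and> (f v = 0 \<longrightarrow> (\<exists>u. E v u \<and> f u = 2))"
    and ind: "\<forall>u\<in>V. \<forall>v\<in>V. f u = 0 \<and> f v = 0 \<longrightarrow> \<not> E u v"
    using assms(2) unfolding is_OIRD_def is_RDF_def by auto
  have "is_OIDRD V E g"
    unfolding is_OIDRD_def is_DRD_def
  proof (intro conjI)
    show "\<forall>v\<in>V. g v \<le> 3 \<and> (g v = 0 \<longrightarrow> (\<exists>u. E v u \<and> g u = 3) \<or>
                     (\<exists>u w. u \<noteq> w \<and> E v u \<and> E v w \<and> g u = 2 \<and> g w = 2))
     \<and> (g v = 1 \<longrightarrow> (\<exists>u. E v u \<and> g u \<ge> 2))"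
    proof (intro ballI conjI)
    fix v assume v: "v \<in> V"
    show "g v \<le> 3" by (simp add: g_def)
    show "g v = 0 \<longrightarrow> (\<exists>u. E v u \<and> g u = 3) \<or>
                     (\<exists>u w. u \<noteq> w \<and> E v u \<and> E v w \<and> g u = 2 \<and> g w = 2)"
    proof
      assume "g v = 0"
      hence "f v = 0" by (simp add: g_def split: if_splits)
      then obtain u where "E v u" "f u = 2" using rdf v by blast
      hence "E v u \<and> g u = 3" by (simp add: g_def)
      thus "(\<exists>u. E v u \<and> g u = 3) \<or>
                     (\<exists>u w. u \<noteq> w \<and> E v u \<and> E v w \<and> g u = 2 \<and> g w = 2)" by blast
    qed
    show "g v = 1 \<longrightarrow> (\<exists>u. E v u \<and> g u \<ge> 2)" by (simp add: g_def)
    qed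
  next
    show "\<forall>u\<in>V. \<forall>v\<in>V. g u = 0 \<and> g v = 0 \<longrightarrow> \<not> E u v"
      using ind by (auto simp: g_def split: if_splits)
  qed
  hence le: "gamma_oidR V E \<le> weight V g"
    unfolding gamma_oidR_def by (auto intro: Least_le)
  have pt: "\<forall>v\<in>V. int (g v) = 2 * int (f v) - (if f v = 2 then 1 else 0)"
    using rdf by (auto simp: g_def)
  have "int (weight V g) = (\<Sum>v\<in>V. 2 * int (f v) - (if f v = 2 then 1 else 0))"
    unfolding weight_def using pt by (simp add: of_nat_sum)
  also have "\<dots> = 2 * (\<Sum>v\<in>V. int (f v)) - (\<Sum>v\<in>V. (if f v = 2 then 1 else 0))"
    by (simp add: sum_subtractf sum_distrib_left)
  also have "(\<Sum>v\<in>V. (if f v = 2 then 1 else 0::int)) = int (card {v\<in>V. f v = 2})"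
    using fin by (simp add: sum.If_cases) (metis Collect_conj_eq Collect_mem_eq)
  also have "(\<Sum>v\<in>V. int (f v)) = int (gamma_oiR V E)"
    using assms(3) unfolding weight_def by (metis of_nat_sum)
  finally show ?thesis using le by linarith
qed

end
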